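(* Let $\Gamma_{\mathcal{W}}$ and $t_\lambda$ be as in the context. The stabilizer of $\infty$ in $\Gamma_{\mathcal{W}}$ is the cyclic group generated by $t_\lambda$.
   Context: $\Gamma$ is a geometrically finite, non-cocompact Fuchsian group acting on the upper half-plane $\mathbb{H}$, containing hyperbolic but no parabolic elements, with $\Gamma\backslash\mathbb{H}$ of infinite area, and whose ordinary set contains a neighborhood of $\infty$. For $g=\begin{bmatrix}a&b\\c&d\end{bmatrix}\in\Gamma\setminus\{\mathrm{id}\}$ let $\mathrm{I}(g)=\{z\in\mathbb{H}:|cz+d|=1\}$, $\mathrm{ext}\,\mathrm{I}(g)=\{z:|cz+d|>1\}$, $\mathcal{K}=\bigcap_{g\ne\mathrm{id}}\mathrm{ext}\,\mathrm{I}(g)$; $\Gamma_{\mathrm{REL}}$ is the set of $g$ such that $\mathrm{I}(g)\cap\partial\mathcal{K}$ contains more than one point. With $\mathrm{pr}_\infty(x+iy)=x$, let $\alpha$ (resp. $\beta$) be the largest (resp. smallest) real number with $\partial\mathcal{K}\subseteq\mathrm{pr}_\infty^{-1}([\alpha,\beta])$, fix $\alpha'<\alpha$, $\beta'>\beta$, $\lambda=\beta'-\alpha'$, $t_\lambda=\begin{bmatrix}1&\lambda\\0&1\end{bmatrix}$, and $\mathcal{W}=\mathcal{K}\cap\mathrm{pr}_\infty^{-1}((\alpha',\beta'))$. $\Gamma_{\mathcal{W}}$ is the group generated by $\Gamma_{\mathrm{REL}}\cup\{t_\lambda\}$; it is a Fuchsian group having $\mathcal{W}$ as a fundamental domain.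 *)

theory Defs
  imports "HOL-Analysis.Analysis"
begin

text \<open>A matrix [a b; c d]. A subgroup of PSL(2,R) is represented by its full
  preimage in SL(2,R), i.e. a subgroup of SL(2,R) containing -I.\<close>

record m2 =
  ma :: real
  mb :: real
  mc :: real
  md :: real

definition mI :: m2 where "mI = \<lparr>ma = 1, mb = 0, mc = 0, md = 1\<rparr>"

definition mneg :: "m2 \<Rightarrow> m2" where
  "mneg g = \<lparr>ma = - ma g, mb = - mb g, mc = - mc g, md = - md g\<rparr>"

definition mmul :: "m2 \<Rightarrow> m2 \<Rightarrow> m2" where
  "mmul g h = \<lparr>ma = ma g * ma h + mb g * mc h, mb = ma g * mb h + mb g * md h,
               mc = mc g * ma h + md g * mc h, md = mc g * mb h + md g * md h\<rparr>"

definition mdet :: "m2 \<Rightarrow> real" where "mdet g = ma g * md g - mb g * mc g"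

text \<open>Inverse of a determinant-one matrix.\<close>
definition minv :: "m2 \<Rightarrow> m2" where
  "minv g = \<lparr>ma = md g, mb = - mb g, mc = - mc g, md = ma g\<rparr>"

definition SL2 :: "m2 set" where "SL2 = {g. mdet g = 1}"

definition mtrace :: "m2 \<Rightarrow> real" where "mtrace g = ma g + md g"

definition is_id :: "m2 \<Rightarrow> bool" where "is_id g \<longleftrightarrow> g = mI \<or> g = mneg mI"

definition psl_subgroup :: "m2 set \<Rightarrow> bool" where
  "psl_subgroup G \<longleftrightarrow> G \<subseteq> SL2 \<and> mI \<in> G \<and> mneg mI \<in> G \<and>
     (\<forall>g\<in>G. \<forall>h\<in>G. mmul g h \<in> G) \<and> (\<forall>g\<in>G. minv g \<in> G)"

inductive_set gen_group :: "m2 set \<Rightarrow> m2 set" for S where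
  gen_id: "mI \<in> gen_group S"
| gen_neg: "mneg mI \<in> gen_group S"
| gen_mul: "s \<in> S \<Longrightarrow> g \<in> gen_group S \<Longrightarrow> mmul s g \<in> gen_group S"
| gen_mul_inv: "s \<in> S \<Longrightarrow> g \<in> gen_group S \<Longrightarrow> mmul (minv s) g \<in> gen_group S"

text \<open>Stabilizer of \<infinity>: g(\<infinity>) = a/c equals \<infinity> iff c = 0.\<close>
definition stab_inf :: "m2 set \<Rightarrow> m2 set" where
  "stab_inf G = {g \<in> G. mc g = 0}"

definition UHP :: "complex set" where "UHP = {z. Im z > 0}"

definition moeb :: "m2 \<Rightarrow> complex \<Rightarrow> complex" where
  "moeb g z = (of_real (ma g) * z + of_real (mb g)) / (of_real (mc g) * z + of_real (md g))"

text \<open>Discrete subgroup of PSL(2,R) (discreteness checked in SL(2,R), which is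
  equivalent).\<close>
definition fuchsian :: "m2 set \<Rightarrow> bool" where
  "fuchsian G \<longleftrightarrow> psl_subgroup G \<and>
     (\<forall>g\<in>G. \<exists>e>0. \<forall>h\<in>G.
        \<bar>ma h - ma g\<bar> + \<bar>mb h - mb g\<bar> + \<bar>mc h - mc g\<bar> + \<bar>md h - md g\<bar> < e \<longrightarrow> h = g)"

definition hyperbolic_elt :: "m2 \<Rightarrow> bool" where
  "hyperbolic_elt g \<longleftrightarrow> \<bar>mtrace g\<bar> > 2"

definition parabolic_elt :: "m2 \<Rightarrow> bool" where
  "parabolic_elt g \<longleftrightarrow> \<bar>mtrace g\<bar> = 2 \<and> \<not> is_id g"

definition fundamental_domain :: "m2 set \<Rightarrow> complex set \<Rightarrow> bool" where
  "fundamental_domain G F \<longleftrightarrow> open F \<and> F \<subseteq> UHP \<and>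
     (\<forall>g\<in>G. \<not> is_id g \<longrightarrow> moeb g ` F \<inter> F = {}) \<and>
     (\<Union>g\<in>G. moeb g ` (closure F \<inter> UHP)) = UHP"

text \<open>Open hyperbolic half-planes in H: bounded by a vertical geodesic or a
  semicircle orthogonal to the real axis.\<close>
definition hyp_halfplane :: "complex set \<Rightarrow> bool" where
  "hyp_halfplane P \<longleftrightarrow>
     (\<exists>a::real. P = {z\<in>UHP. Re z < a} \<or> P = {z\<in>UHP. Re z > a}) \<or>
     (\<exists>(a::real) (r::real). r > 0 \<and>
        (P = {z\<in>UHP. cmod (z - of_real a) < r} \<or> P = {z\<in>UHP. cmod (z - of_real a) > r}))"

definition finite_sided_convex_fd :: "m2 set \<Rightarrow> complex set \<Rightarrow> bool" where
  "finite_sided_convex_fd G F \<longleftrightarrow> fundamental_domain G F \<and>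
     (\<exists>\<P>. finite \<P> \<and> (\<forall>P\<in>\<P>. hyp_halfplane P) \<and> F = UHP \<inter> \<Inter>\<P>)"

definition geometrically_finite :: "m2 set \<Rightarrow> bool" where
  "geometrically_finite G \<longleftrightarrow> (\<exists>F. finite_sided_convex_fd G F)"

text \<open>Cocompact: G \ H is compact, i.e. the G-translates of some compact subset of H
  cover H.\<close>
definition cocompact :: "m2 set \<Rightarrow> bool" where
  "cocompact G \<longleftrightarrow> (\<exists>C. compact C \<and> C \<subseteq> UHP \<and> (\<Union>g\<in>G. moeb g ` C) = UHP)"

definition hyp_area :: "complex set \<Rightarrow> ennreal" where
  "hyp_area F = (\<integral>\<^sup>+ z. indicator F z * ennreal (1 / (Im z)\<^sup>2) \<partial>lborel)"

text \<open>G \ H has infinite area: the area of a (finite-sided convex) fundamental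
  domain is infinite.\<close>
definition infinite_covolume :: "m2 set \<Rightarrow> bool" where
  "infinite_covolume G \<longleftrightarrow> (\<exists>F. finite_sided_convex_fd G F \<and> hyp_area F = \<infinity>)"

text \<open>Limit set: accumulation points of orbits of points of H (these lie on the
  boundary R \<union> {\<infinity>}).\<close>
definition limit_point_real :: "m2 set \<Rightarrow> real \<Rightarrow> bool" where
  "limit_point_real G x \<longleftrightarrow> (\<exists>z\<in>UHP. \<exists>s::nat \<Rightarrow> m2. (\<forall>n. s n \<in> G) \<and>
      (\<lambda>n. moeb (s n) z) \<longlonglongrightarrow> of_real x)"

definition limit_point_inf :: "m2 set \<Rightarrow> bool" where
  "limit_point_inf G \<longleftrightarrow> (\<exists>z\<in>UHP. \<exists>s::nat \<Rightarrow> m2. (\<forall>n. s n \<in> G) \<and>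
      filterlim (\<lambda>n. cmod (moeb (s n) z)) at_top sequentially)"

text \<open>The ordinary set contains a neighbourhood of \<infinity>.\<close>
definition ordinary_nbhd_inf :: "m2 set \<Rightarrow> bool" where
  "ordinary_nbhd_inf G \<longleftrightarrow> \<not> limit_point_inf G \<and>
     (\<exists>R. \<forall>x. \<bar>x\<bar> > R \<longrightarrow> \<not> limit_point_real G x)"

definition isom_circle :: "m2 \<Rightarrow> complex set" where
  "isom_circle g = {z\<in>UHP. cmod (of_real (mc g) * z + of_real (md g)) = 1}"

definition ext_isom_circle :: "m2 \<Rightarrow> complex set" where
  "ext_isom_circle g = {z\<in>UHP. cmod (of_real (mc g) * z + of_real (md g)) > 1}"

definition fordK :: "m2 set \<Rightarrow> complex set" where
  "fordK G = UHP \<inter> (\<Inter>g\<in>{g\<in>G. \<not> is_id g}. ext_isom_circle g)"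

definition bdK :: "m2 set \<Rightarrow> complex set" where
  "bdK G = frontier (fordK G) \<inter> UHP"

definition Gamma_REL :: "m2 set \<Rightarrow> m2 set" where
  "Gamma_REL G = {g\<in>G. \<not> is_id g \<and>
      (\<exists>z w. z \<noteq> w \<and> z \<in> isom_circle g \<inter> bdK G \<and> w \<in> isom_circle g \<inter> bdK G)}"

definition translation :: "real \<Rightarrow> m2" where
  "translation l = \<lparr>ma = 1, mb = l, mc = 0, md = 1\<rparr>"

definition Gamma_W :: "m2 set \<Rightarrow> real \<Rightarrow> m2 set" where
  "Gamma_W G l = gen_group (Gamma_REL G \<union> {translation l})"

end

theory Submission
  imports Defs
begin


lemma m2_eqI: fixes g h :: m2 shows "ma g = ma h \<Longrightarrow> mb g = mb h \<Longrightarrow> mc g = mc h \<Longrightarrow> md g = md h \<Longrightarrow> g = h"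
  by (rule m2.equality) (simp_all add: unit_eq[of "more g"] unit_eq[of "more h"])

lemma mmul_assoc: "mmul (mmul a b) c = mmul a (mmul b c)"
  by (rule m2_eqI) (simp_all add: mmul_def algebra_simps)

lemma mmul_mI_left[simp]: "mmul mI g = g"
  by (rule m2_eqI) (simp_all add: mmul_def mI_def)

lemma mmul_mI_right[simp]: "mmul g mI = g"
  by (rule m2_eqI) (simp_all add: mmul_def mI_def)

lemma mmul_mneg_left: "mmul (mneg g) h = mneg (mmul g h)"
  by (rule m2_eqI) (simp_all add: mmul_def mneg_def algebra_simps)

lemma mmul_mneg_right: "mmul g (mneg h) = mneg (mmul g h)"
  by (rule m2_eqI) (simp_all add: mmul_def mneg_def algebra_simps)

lemma mneg_mneg[simp]: "mneg (mneg g) = g"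
  by (rule m2_eqI) (simp_all add: mneg_def)

lemma mdet_mmul: "mdet (mmul g h) = mdet g * mdet h"
  by (simp add: mdet_def mmul_def algebra_simps)

lemma minv_left: "mdet g = 1 \<Longrightarrow> mmul (minv g) g = mI"
  by (rule m2_eqI) (simp_all add: mmul_def minv_def mI_def mdet_def algebra_simps)

lemma minv_right: "mdet g = 1 \<Longrightarrow> mmul g (minv g) = mI"
  by (rule m2_eqI) (simp_all add: mmul_def minv_def mI_def mdet_def algebra_simps)

lemma minv_minv[simp]: "minv (minv g) = g"
  by (rule m2_eqI) (simp_all add: minv_def)

lemma is_id_minv: "is_id (minv g) \<Longrightarrow> is_id g"
proof -
  have 1: "minv mI = mI" by (rule m2_eqI) (simp_all add: minv_def mI_def)
  have 2: "minv (mneg mI) = mneg mI" by (rule m2_eqI) (simp_all add: minv_def mI_def mneg_def)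
  assume "is_id (minv g)"
  then have "minv g = mI \<or> minv g = mneg mI" by (simp add: is_id_def)
  then have "g = minv mI \<or> g = minv (mneg mI)" by (metis minv_minv)
  then show ?thesis using 1 2 by (simp add: is_id_def)
qed

lemma is_id_mneg: "is_id (mneg g) \<Longrightarrow> is_id g"
  unfolding is_id_def by (metis mneg_mneg)

lemma is_id_mul: "is_id x \<Longrightarrow> mmul x g = g \<or> mmul x g = mneg g"
  unfolding is_id_def by (auto simp: mmul_mneg_left)

lemma gen_group_mneg: "g \<in> gen_group S \<Longrightarrow> mneg g \<in> gen_group S"
proof (induction rule: gen_group.induct)
  case gen_id then show ?case by (rule gen_group.gen_neg)
next
  case gen_neg then show ?case by (simp add: gen_group.gen_id)
next
  case (gen_mul s g) then show ?case by (metis gen_group.gen_mul mmul_mneg_right mneg_mneg)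
next
  case (gen_mul_inv s g) then show ?case by (metis gen_group.gen_mul_inv mmul_mneg_right mneg_mneg)
qed

lemma gen_group_mul: "g \<in> gen_group S \<Longrightarrow> h \<in> gen_group S \<Longrightarrow> mmul g h \<in> gen_group S"
proof (induction rule: gen_group.induct)
  case gen_id then show ?case by simp
next
  case gen_neg then show ?case by (simp add: mmul_mneg_left gen_group_mneg)
next
  case (gen_mul s g) then show ?case by (simp add: mmul_assoc gen_group.gen_mul)
next
  case (gen_mul_inv s g) then show ?case by (simp add: mmul_assoc gen_group.gen_mul_inv)
qed

lemma gen_group_mono: "g \<in> gen_group S \<Longrightarrow> S \<subseteq> S' \<Longrightarrow> g \<in> gen_group S'"
proof (induction rule: gen_group.induct)
qed (auto intro: gen_group.intros)

lemma gen_group_gen: "s \<in> S \<Longrightarrow> s \<in> gen_group S"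
  by (metis gen_group.gen_id gen_group.gen_mul mmul_mI_right)

lemma gen_group_geninv: "s \<in> S \<Longrightarrow> minv s \<in> gen_group S"
  by (metis gen_group.gen_id gen_group.gen_mul_inv mmul_mI_right)

lemma T_form: "g \<in> gen_group {translation lam} \<Longrightarrow> mc g = 0 \<and> mdet g = 1"
proof (induction rule: gen_group.induct)
qed (auto simp: mI_def mneg_def mdet_mmul translation_def mdet_def minv_def mmul_def)

lemma T_expl: "g \<in> gen_group {translation lam} \<Longrightarrow>
   \<exists>k::int. \<exists>s. (s = 1 \<or> s = -1) \<and> ma g = s \<and> mb g = s * of_int k * lam \<and> mc g = 0 \<and> md g = s"
proof (induction rule: gen_group.induct)
  case gen_id then show ?case by (rule exI[of _ 0], auto simp: mI_def)
next
  case gen_neg then show ?case by (rule exI[of _ 0], auto simp: mI_def mneg_def)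
next
  case (gen_mul s g)
  then obtain k e where "(e = 1 \<or> e = -1) \<and> ma g = e \<and> mb g = e * of_int k * lam \<and> mc g = 0 \<and> md g = e" by blast
  with gen_mul show ?case
    by (intro exI[of _ "k + 1"] exI[of _ e]) (auto simp: mmul_def translation_def algebra_simps)
next
  case (gen_mul_inv s g)
  then obtain k e where "(e = 1 \<or> e = -1) \<and> ma g = e \<and> mb g = e * of_int k * lam \<and> mc g = 0 \<and> md g = e" by blast
  with gen_mul_inv show ?case
    by (intro exI[of _ "k - 1"] exI[of _ e]) (auto simp: mmul_def minv_def translation_def algebra_simps)
qed

lemma T_nonid: "g \<in> gen_group {translation lam} \<Longrightarrow> \<not> is_id g \<Longrightarrow>
   \<exists>k::int. \<exists>s. k \<noteq> 0 \<and> (s = 1 \<or> s = -1) \<and> ma g = s \<and> mb g = s * of_int k * lam \<and> mc g = 0 \<and> md g = s"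
proof -
  assume g: "g \<in> gen_group {translation lam}" and ni: "\<not> is_id g"
  from T_expl[OF g] obtain k s where ks: "(s = 1 \<or> s = -1) \<and> ma g = s \<and> mb g = s * of_int k * lam \<and> mc g = 0 \<and> md g = s" by blast
  have "k \<noteq> 0"
  proof
    assume "k = 0"
    then have "g = mI \<or> g = mneg mI" using ks by (auto intro!: m2_eqI simp: mI_def mneg_def)
    with ni show False by (simp add: is_id_def)
  qed
  with ks show ?thesis by blast
qed

inductive NF :: "m2 set \<Rightarrow> real \<Rightarrow> nat \<Rightarrow> m2 \<Rightarrow> bool" for G lam where
  nfT: "\<tau> \<in> gen_group {translation lam} \<Longrightarrow> NF G lam 0 \<tau>"
| nfG: "\<gamma> \<in> G \<Longrightarrow> \<not> is_id \<gamma> \<Longrightarrow> NF G lam k g \<Longrightarrow> k \<noteq> 1 \<Longrightarrow> NF G lam 1 (mmul \<gamma> g)"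
| nfL: "\<tau> \<in> gen_group {translation lam} \<Longrightarrow> \<not> is_id \<tau> \<Longrightarrow> NF G lam 1 g \<Longrightarrow> NF G lam 2 (mmul \<tau> g)"

lemma psl_mneg: "psl_subgroup G \<Longrightarrow> g \<in> G \<Longrightarrow> mneg g \<in> G"
  unfolding psl_subgroup_def by (metis mmul_mneg_left mmul_mI_left)

lemma NF_mneg: assumes "psl_subgroup G" and nf: "NF G lam k g" shows "NF G lam k (mneg g)"
  using nf
proof (cases rule: NF.cases)
  case nfT then show ?thesis by (simp add: NF.nfT gen_group_mneg)
next
  case (nfG \<gamma> k0 g')
  have a: "mneg \<gamma> \<in> G" using psl_mneg[OF assms(1)] nfG by blast
  have b: "\<not> is_id (mneg \<gamma>)" using is_id_mneg nfG by blast
  have "NF G lam 1 (mmul (mneg \<gamma>) g')" by (rule NF.nfG[OF a b]) (use nfG in auto)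
  then show ?thesis using nfG by (simp add: mmul_mneg_left)
next
  case (nfL \<tau> g')
  have a: "mneg \<tau> \<in> gen_group {translation lam}" using gen_group_mneg nfL by blast
  have b: "\<not> is_id (mneg \<tau>)" using is_id_mneg nfL by blast
  have "NF G lam 2 (mmul (mneg \<tau>) g')" by (rule NF.nfL[OF a b]) (use nfL in auto)
  then show ?thesis using nfL by (simp add: mmul_mneg_left)
qed

lemma NF_pm: "psl_subgroup G \<Longrightarrow> NF G lam k g \<Longrightarrow> (h = g \<or> h = mneg g) \<Longrightarrow> NF G lam k h"
  using NF_mneg by blast

lemma NF_left_T: assumes G: "psl_subgroup G" and s: "\<sigma> \<in> gen_group {translation lam}" and nf: "NF G lam k g"
  shows "\<exists>k'. NF G lam k' (mmul \<sigma> g)"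
  using nf
proof (cases rule: NF.cases)
  case nfT then show ?thesis using s by (metis NF.nfT gen_group_mul)
next
  case (nfG \<gamma> k g')
  show ?thesis
  proof (cases "is_id \<sigma>")
    case True then show ?thesis using NF_pm[OF G nf] is_id_mul by blast
  next
    case False then show ?thesis using NF.nfL[OF s False] nf nfG by blast
  qed
next
  case (nfL \<tau> g')
  have st: "mmul \<sigma> \<tau> \<in> gen_group {translation lam}" using s nfL gen_group_mul by blast
  have eq: "mmul \<sigma> g = mmul (mmul \<sigma> \<tau>) g'" using nfL by (simp add: mmul_assoc)
  show ?thesis
  proof (cases "is_id (mmul \<sigma> \<tau>)")
    case True then show ?thesis using NF_pm[OF G] nfL is_id_mul eq by metis
  next
    case False then show ?thesis using NF.nfL[OF st False] nfL eq by metis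
  qed
qed

lemma NF_left_G: assumes G: "psl_subgroup G" and s: "\<sigma> \<in> G" and nf: "NF G lam k g"
  shows "\<exists>k'. NF G lam k' (mmul \<sigma> g)"
proof (cases "is_id \<sigma>")
  case True then show ?thesis using NF_pm[OF G nf] is_id_mul by blast
next
  case ni: False
  show ?thesis using nf
  proof (cases rule: NF.cases)
    case nfT then show ?thesis using NF.nfG[OF s ni nf] by auto
  next
    case (nfL \<tau> g') then show ?thesis using NF.nfG[OF s ni nf] by auto
  next
    case (nfG \<gamma> k0 g')
    have st: "mmul \<sigma> \<gamma> \<in> G" using s nfG G unfolding psl_subgroup_def by blast
    have eq: "mmul \<sigma> g = mmul (mmul \<sigma> \<gamma>) g'" using nfG by (simp add: mmul_assoc)
    show ?thesis
    proof (cases "is_id (mmul \<sigma> \<gamma>)")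
      case True then show ?thesis using NF_pm[OF G] nfG is_id_mul eq by metis
    next
      case False then show ?thesis using NF.nfG[OF st False] nfG eq by metis
    qed
  qed
qed

lemma NF_all: assumes G: "psl_subgroup G" and R: "R \<subseteq> G"
  shows "g \<in> gen_group (R \<union> {translation lam}) \<Longrightarrow> \<exists>k. NF G lam k g"
proof (induction rule: gen_group.induct)
  case gen_id then show ?case using NF.nfT gen_group.gen_id by blast
next
  case gen_neg then show ?case using NF.nfT gen_group.gen_neg by blast
next
  case (gen_mul s g)
  then obtain k where nf: "NF G lam k g" by blast
  show ?case
  proof (cases "s \<in> R")
    case True then show ?thesis using NF_left_G[OF G _ nf] R by blast
  next
    case False then have "s = translation lam" using gen_mul by blast
    then show ?thesis using NF_left_T[OF G _ nf] gen_group_gen[of s "{translation lam}"] by blast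
  qed
next
  case (gen_mul_inv s g)
  then obtain k where nf: "NF G lam k g" by blast
  show ?case
  proof (cases "s \<in> R")
    case True then have "minv s \<in> G" using R G unfolding psl_subgroup_def by blast
    then show ?thesis using NF_left_G[OF G _ nf] by blast
  next
    case False then have "s = translation lam" using gen_mul_inv by blast
    then show ?thesis using NF_left_T[OF G _ nf] gen_group_geninv[of s "{translation lam}"] by blast
  qed
qed



lemma NF_prop:
  assumes G: "psl_subgroup G"
    and Hc: "\<forall>\<gamma>\<in>G. \<not> is_id \<gamma> \<longrightarrow> mc \<gamma> \<noteq> 0"
    and HJ: "\<forall>\<gamma>\<in>G. \<not> is_id \<gamma> \<longrightarrow> (\<forall>x. \<bar>mc \<gamma> * x + md \<gamma>\<bar> \<le> 1 \<longrightarrow> \<alpha> \<le> x \<and> x \<le> \<beta>)"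
    and lam: "\<beta> - \<alpha> < lam" and ab: "\<alpha> \<le> \<beta>"
  shows "NF G lam k g \<Longrightarrow> mdet g = 1 \<and> (k = 0 \<longleftrightarrow> mc g = 0) \<and>
     (k = 1 \<longrightarrow> \<alpha> \<le> ma g / mc g \<and> ma g / mc g \<le> \<beta>) \<and>
     (k = 2 \<longrightarrow> ma g / mc g < \<alpha> \<or> \<beta> < ma g / mc g) \<and> k \<le> 2"
proof (induction rule: NF.induct)
  case (nfT \<tau>) then show ?case using T_form[OF nfT] by simp
next
  case (nfG \<gamma> k g)
  have SL: "mdet \<gamma> = 1" using G nfG unfolding psl_subgroup_def SL2_def by blast
  have cg: "mc \<gamma> \<noteq> 0" using Hc nfG by blast
  have mi: "minv \<gamma> \<in> G" "\<not> is_id (minv \<gamma>)" using G nfG is_id_minv unfolding psl_subgroup_def by blast+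
  have HJi: "\<And>y. \<bar>- mc \<gamma> * y + ma \<gamma>\<bar> \<le> 1 \<Longrightarrow> \<alpha> \<le> y \<and> y \<le> \<beta>"
    using HJ mi by (auto simp: minv_def)
  have det: "mdet (mmul \<gamma> g) = 1" using SL nfG by (simp add: mdet_mmul)
  show ?case
  proof (cases "k = 0")
    case True
    then have c0: "mc g = 0" and dg: "mdet g = 1" using nfG by auto
    then have a0: "ma g \<noteq> 0" by (auto simp: mdet_def)
    have c: "mc (mmul \<gamma> g) = mc \<gamma> * ma g" using c0 by (simp add: mmul_def)
    have r: "ma (mmul \<gamma> g) / mc (mmul \<gamma> g) = ma \<gamma> / mc \<gamma>" using c0 a0 by (simp add: mmul_def)
    have "\<bar>- mc \<gamma> * (ma \<gamma> / mc \<gamma>) + ma \<gamma>\<bar> \<le> 1" using cg by simp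
    from HJi[OF this] show ?thesis using c r cg a0 det by simp
  next
    case False
    then have k2: "k = 2" using nfG by auto
    then have cg0: "mc g \<noteq> 0" and dg: "mdet g = 1" and out: "ma g / mc g < \<alpha> \<or> \<beta> < ma g / mc g" using nfG by auto
    define x where "x = ma g / mc g"
    have big: "\<bar>mc \<gamma> * x + md \<gamma>\<bar> > 1"
    proof (rule ccontr)
      assume "\<not> ?thesis"
      then have "\<alpha> \<le> x \<and> x \<le> \<beta>" using HJ nfG(1,2) by auto
      then show False using out unfolding x_def by linarith
    qed
    define D where "D = mc \<gamma> * x + md \<gamma>"
    have D0: "D \<noteq> 0" using big D_def by auto
    have c: "mc (mmul \<gamma> g) = mc g * D" using cg0 by (simp add: mmul_def D_def x_def field_simps)
    have a: "ma (mmul \<gamma> g) = mc g * (ma \<gamma> * x + mb \<gamma>)" using cg0 by (simp add: mmul_def x_def field_simps)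
    define y where "y = ma (mmul \<gamma> g) / mc (mmul \<gamma> g)"
    have y: "y = (ma \<gamma> * x + mb \<gamma>) / D" using a c cg0 D0 by (simp add: y_def)
    have "- mc \<gamma> * y + ma \<gamma> = (ma \<gamma> * md \<gamma> - mb \<gamma> * mc \<gamma>) / D"
      using D0 by (simp add: y D_def field_simps)
    also have "\<dots> = 1 / D" using SL by (simp add: mdet_def)
    finally have "\<bar>- mc \<gamma> * y + ma \<gamma>\<bar> \<le> 1" using big D_def by (simp add: abs_div_pos)
    from HJi[OF this] show ?thesis using c cg0 D0 det unfolding y_def by simp
  qed
next
  case (nfL \<tau> g)
  obtain k s where ks: "k \<noteq> 0" "s = 1 \<or> s = -1" "ma \<tau> = s" "mb \<tau> = s * of_int k * lam" "mc \<tau> = 0" "md \<tau> = s"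
    using T_nonid[OF nfL(1,2)] by blast
  have det: "mdet (mmul \<tau> g) = 1" using T_form[OF nfL(1)] nfL by (simp add: mdet_mmul)
  have cg: "mc g \<noteq> 0" and x: "\<alpha> \<le> ma g / mc g" "ma g / mc g \<le> \<beta>" using nfL by auto
  have c: "mc (mmul \<tau> g) = s * mc g" using ks by (simp add: mmul_def)
  have r: "ma (mmul \<tau> g) / mc (mmul \<tau> g) = ma g / mc g + of_int k * lam"
    using ks cg by (auto simp: mmul_def field_simps)
  have "ma g / mc g + of_int k * lam < \<alpha> \<or> \<beta> < ma g / mc g + of_int k * lam"
  proof (cases "k > 0")
    case True
    then have "of_int k * lam \<ge> lam" using lam ab by (simp add: mult_le_cancel_right1)
    then show ?thesis using x lam by linarith
  next
    case False
    then have "k \<le> -1" using ks by linarith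
    then have "of_int k * lam \<le> - lam" using lam ab
    proof -
      have "(of_int k::real) \<le> -1" using \<open>k \<le> -1\<close> by linarith
      moreover have "lam \<ge> 0" using lam ab by linarith
      ultimately have "of_int k * lam \<le> -1 * lam" by (rule mult_right_mono)
      then show ?thesis by simp
    qed
    then show ?thesis using x lam by linarith
  qed
  then show ?case using c r ks cg det by auto
qed

lemma pingpong:
  assumes G: "psl_subgroup G" and R: "R \<subseteq> G"
    and Hc: "\<forall>\<gamma>\<in>G. \<not> is_id \<gamma> \<longrightarrow> mc \<gamma> \<noteq> 0"
    and HJ: "\<forall>\<gamma>\<in>G. \<not> is_id \<gamma> \<longrightarrow> (\<forall>x. \<bar>mc \<gamma> * x + md \<gamma>\<bar> \<le> 1 \<longrightarrow> \<alpha> \<le> x \<and> x \<le> \<beta>)"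
    and lam: "\<beta> - \<alpha> < lam" and ab: "\<alpha> \<le> \<beta>"
  shows "stab_inf (gen_group (R \<union> {translation lam})) = gen_group {translation lam}"
proof
  show "stab_inf (gen_group (R \<union> {translation lam})) \<subseteq> gen_group {translation lam}"
  proof
    fix g assume "g \<in> stab_inf (gen_group (R \<union> {translation lam}))"
    then have g: "g \<in> gen_group (R \<union> {translation lam})" and c: "mc g = 0" by (auto simp: stab_inf_def)
    obtain k where nf: "NF G lam k g" using NF_all[OF G R g] by blast
    have "k = 0" using NF_prop[OF G Hc HJ lam ab nf] c by blast
    with nf show "g \<in> gen_group {translation lam}" by (cases rule: NF.cases) auto
  qed
next
  show "gen_group {translation lam} \<subseteq> stab_inf (gen_group (R \<union> {translation lam}))"
    using T_form gen_group_mono by (auto simp: stab_inf_def)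
qed



lemma bound_M: assumes "\<not> limit_point_inf G" shows "\<exists>M. \<forall>h\<in>G. cmod (moeb h \<i>) \<le> M"
proof (rule ccontr)
  assume "\<not> ?thesis"
  then have "\<forall>n::nat. \<exists>h\<in>G. cmod (moeb h \<i>) > real n" by (meson not_le)
  then obtain s where s: "\<And>n. s n \<in> G \<and> cmod (moeb (s n) \<i>) > real n" by metis
  have "filterlim (\<lambda>n. cmod (moeb (s n) \<i>)) at_top sequentially"
    by (rule filterlim_at_top_mono[OF filterlim_real_sequentially]) (use s in \<open>auto intro!: always_eventually less_imp_le\<close>)
  moreover have "\<i> \<in> UHP" by (simp add: UHP_def)
  ultimately have "limit_point_inf G" unfolding limit_point_inf_def using s by blast
  with assms show False by blast
qed

lemma cmod_lin: "cmod (of_real a * \<i> + of_real b) = sqrt (a\<^sup>2 + b\<^sup>2)"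
  by (simp add: cmod_def add.commute)

lemma cmod_moeb_i:
  "cmod (moeb h \<i>) = sqrt ((ma h)\<^sup>2 + (mb h)\<^sup>2) / sqrt ((mc h)\<^sup>2 + (md h)\<^sup>2)"
  unfolding moeb_def norm_divide by (simp only: mult.commute[of _ \<i>] cmod_lin[unfolded mult.commute[of _ \<i>]])

lemma den_pos: "mdet h = 1 \<Longrightarrow> (mc h)\<^sup>2 + (md h)\<^sup>2 > 0"
proof (rule ccontr)
  assume "mdet h = 1" "\<not> (mc h)\<^sup>2 + (md h)\<^sup>2 > 0"
  then have "mc h = 0 \<and> md h = 0" by (simp add: sum_power2_le_zero_iff not_less)
  with \<open>mdet h = 1\<close> show False by (simp add: mdet_def)
qed

lemma bound_K: assumes G: "psl_subgroup G" and nl: "\<not> limit_point_inf G"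
  shows "\<exists>K\<ge>0. \<forall>h\<in>G. (ma h)\<^sup>2 + (mb h)\<^sup>2 \<le> K * ((mc h)\<^sup>2 + (md h)\<^sup>2)"
proof -
  obtain M where M: "\<forall>h\<in>G. cmod (moeb h \<i>) \<le> M" using bound_M[OF nl] by blast
  have "mI \<in> G" using G by (simp add: psl_subgroup_def)
  then have M0: "M \<ge> 0" using M norm_ge_zero order_trans by blast
  show ?thesis
  proof (intro exI[of _ "M\<^sup>2"] conjI ballI)
    show "0 \<le> M\<^sup>2" by simp
    fix h assume h: "h \<in> G"
    then have d: "mdet h = 1" using G by (auto simp: psl_subgroup_def SL2_def)
    define P where "P = (ma h)\<^sup>2 + (mb h)\<^sup>2"
    define Q where "Q = (mc h)\<^sup>2 + (md h)\<^sup>2"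
    have Q: "Q > 0" using den_pos[OF d] Q_def by simp
    have P: "P \<ge> 0" unfolding P_def by simp
    have "cmod (moeb h \<i>) \<le> M" using M h by blast
    then have "sqrt P / sqrt Q \<le> M" unfolding cmod_moeb_i P_def Q_def .
    then have "sqrt P \<le> M * sqrt Q" using Q by (simp add: divide_le_eq)
    then have "(sqrt P)\<^sup>2 \<le> (M * sqrt Q)\<^sup>2" by (rule power_mono) (use P in simp)
    then show "P \<le> M\<^sup>2 * Q" using P Q by (simp add: power_mult_distrib)
  qed
qed

fun pw :: "m2 \<Rightarrow> nat \<Rightarrow> m2" where
  "pw h 0 = mI"
| "pw h (Suc n) = mmul h (pw h n)"

lemma pw_in: "psl_subgroup G \<Longrightarrow> h \<in> G \<Longrightarrow> pw h n \<in> G"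
  by (induction n) (auto simp: psl_subgroup_def)

lemma pw_form: "mc h = 0 \<Longrightarrow> mc (pw h n) = 0 \<and> ma (pw h n) = (ma h)^n \<and> md (pw h n) = (md h)^n"
  by (induction n) (auto simp: mI_def mmul_def)

lemma c0_a4: assumes G: "psl_subgroup G" and K: "\<forall>h\<in>G. (ma h)\<^sup>2 + (mb h)\<^sup>2 \<le> K * ((mc h)\<^sup>2 + (md h)\<^sup>2)"
  and h: "h \<in> G" and c: "mc h = 0"
  shows "(ma h)^4 \<le> 1"
proof (rule ccontr)
  assume "\<not> ?thesis"
  then have gt: "(ma h)^4 > 1" by simp
  have d: "ma h * md h = 1" using G h c by (auto simp: psl_subgroup_def SL2_def mdet_def)
  have "\<forall>n. ((ma h)^4)^n \<le> K"
  proof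
    fix n
    have p: "pw h n \<in> G" by (rule pw_in[OF G h])
    have f: "mc (pw h n) = 0" "ma (pw h n) = (ma h)^n" "md (pw h n) = (md h)^n" using pw_form[OF c] by auto
    have "(ma (pw h n))\<^sup>2 + (mb (pw h n))\<^sup>2 \<le> K * ((mc (pw h n))\<^sup>2 + (md (pw h n))\<^sup>2)" using K p by blast
    then have "((ma h)^n)\<^sup>2 + (mb (pw h n))\<^sup>2 \<le> K * ((md h)^n)\<^sup>2" using f by simp
    then have "((ma h)^n)\<^sup>2 \<le> K * ((md h)^n)\<^sup>2" using zero_le_power2[of "mb (pw h n)"] by linarith
    then have "((ma h)^n)\<^sup>2 * ((ma h)^n)\<^sup>2 \<le> K * ((md h)^n)\<^sup>2 * ((ma h)^n)\<^sup>2"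
      by (rule mult_right_mono) simp
    also have "\<dots> = K * ((ma h * md h)^n)\<^sup>2" by (simp add: power_mult_distrib)
    also have "\<dots> = K" using d by simp
    finally have "((ma h)^n)\<^sup>2 * ((ma h)^n)\<^sup>2 \<le> K" .
    moreover have "((ma h)^n)\<^sup>2 * ((ma h)^n)\<^sup>2 = ((ma h)^4)^n" by (simp flip: power_mult power_add add: mult.commute)
    ultimately show "((ma h)^4)^n \<le> K" by simp
  qed
  moreover obtain n where "K < ((ma h)^4)^n" using real_arch_pow[OF gt] by blast
  ultimately show False by (meson not_le)
qed

lemma c_nonzero: assumes G: "psl_subgroup G" and K: "\<forall>h\<in>G. (ma h)\<^sup>2 + (mb h)\<^sup>2 \<le> K * ((mc h)\<^sup>2 + (md h)\<^sup>2)"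
  and np: "\<forall>g\<in>G. \<not> parabolic_elt g"
  shows "\<forall>h\<in>G. \<not> is_id h \<longrightarrow> mc h \<noteq> 0"
proof (intro ballI impI notI)
  fix h assume h: "h \<in> G" and ni: "\<not> is_id h" and c: "mc h = 0"
  have mi: "minv h \<in> G" using G h by (simp add: psl_subgroup_def)
  have a4: "(ma h)^4 \<le> 1" by (rule c0_a4[OF G K h c])
  have d4: "(md h)^4 \<le> 1" using c0_a4[OF G K mi] c by (simp add: minv_def)
  have d: "ma h * md h = 1" using G h c by (auto simp: psl_subgroup_def SL2_def mdet_def)
  have p1: "(ma h)^4 * (md h)^4 = 1" using d by (metis power_mult_distrib power_one)
  have "(ma h)^4 \<ge> 1"
  proof (rule ccontr)
    assume "\<not> ?thesis"
    moreover have "(ma h)^4 * (md h)^4 \<le> (ma h)^4" using d4 by (intro mult_left_le) auto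
    ultimately show False using p1 by linarith
  qed
  then have a41: "(ma h)^4 = 1" using a4 by linarith
  have "((ma h)\<^sup>2)\<^sup>2 = 1" using a41 by (simp flip: power_mult)
  then have "(ma h)\<^sup>2 = 1 \<or> (ma h)\<^sup>2 = -1" by (rule power2_eq_1_iff[THEN iffD1])
  moreover have "(ma h)\<^sup>2 \<noteq> -1" using zero_le_power2[of "ma h"] by linarith
  ultimately have "(ma h)\<^sup>2 = 1" by blast
  then have "ma h = 1 \<or> ma h = -1" by (simp add: power2_eq_1_iff)
  then have "md h = ma h" using d by auto
  then have "\<bar>mtrace h\<bar> = 2" using \<open>ma h = 1 \<or> ma h = -1\<close> by (auto simp: mtrace_def)
  then have "parabolic_elt h" using ni by (simp add: parabolic_elt_def)
  with np h show False by blast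
qed



lemma bnd_aux:
  fixes X Y K :: real
  assumes K: "K > 0" and a: "X \<le> K * (1 + Y)" and YX: "Y \<le> X" and Y0: "0 \<le> Y"
    and p: "X * Y \<le> 2 + 2 * K * (1 + X)"
  shows "X \<le> 1 + 3 * K + 4 * K\<^sup>2"
proof (cases "X \<le> 1")
  case True
  have "0 \<le> 3 * K + 4 * K\<^sup>2" using K by simp
  then show ?thesis using True by linarith
next
  case False
  then have X1: "X > 1" by simp
  have "X / K - 1 \<le> Y" using a K by (simp add: divide_le_eq algebra_simps)
  then have "X * (X / K - 1) \<le> X * Y" using X1 by (intro mult_left_mono) auto
  then have "X * (X / K - 1) \<le> 2 + 2 * K * (1 + X)" using p by linarith
  then have "K * (X * (X / K - 1)) \<le> K * (2 + 2 * K * (1 + X))" using K by (intro mult_left_mono) auto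
  moreover have "K * (X * (X / K - 1)) = X * X - K * X" using K by (simp add: field_simps)
  moreover have "K * (2 + 2 * K * (1 + X)) = 2 * K + 2 * K\<^sup>2 + 2 * K\<^sup>2 * X" by (simp add: algebra_simps power2_eq_square)
  ultimately have q: "X * X \<le> K * X + 2 * K + 2 * K\<^sup>2 + 2 * K\<^sup>2 * X" by linarith
  have kk: "0 \<le> 2 * K + 2 * K\<^sup>2" using K by simp
  have "(2 * K + 2 * K\<^sup>2) * 1 \<le> (2 * K + 2 * K\<^sup>2) * X" using X1 by (intro mult_left_mono[OF _ kk]) simp
  then have "2 * K + 2 * K\<^sup>2 \<le> (2 * K + 2 * K\<^sup>2) * X" by simp
  with q have "X * X \<le> (3 * K + 4 * K\<^sup>2) * X" by (simp add: algebra_simps)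
  then have "X \<le> 3 * K + 4 * K\<^sup>2" using X1 by simp
  then show ?thesis by simp
qed

lemma bounded_entries:
  fixes a b c d K :: real
  assumes K: "K \<ge> 0" and h1: "a\<^sup>2 + b\<^sup>2 \<le> K * (c\<^sup>2 + d\<^sup>2)" and h2: "d\<^sup>2 + b\<^sup>2 \<le> K * (c\<^sup>2 + a\<^sup>2)"
    and det: "a * d - b * c = 1" and c1: "\<bar>c\<bar> \<le> 1"
  shows "\<bar>a\<bar> \<le> (1 + K) * (1 + (1 + 3 * K + 4 * K\<^sup>2)) \<and> \<bar>b\<bar> \<le> (1 + K) * (1 + (1 + 3 * K + 4 * K\<^sup>2))
     \<and> \<bar>c\<bar> \<le> (1 + K) * (1 + (1 + 3 * K + 4 * K\<^sup>2)) \<and> \<bar>d\<bar> \<le> (1 + K) * (1 + (1 + 3 * K + 4 * K\<^sup>2))"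
proof -
  define B0 where "B0 = 1 + 3 * K + 4 * K\<^sup>2"
  define B where "B = (1 + K) * (1 + B0)"
  have "0 \<le> 3 * K + 4 * K\<^sup>2" using K by simp
  then have B0: "B0 \<ge> 1" unfolding B0_def by linarith
  have BB0: "B \<ge> 1 + B0"
  proof -
    have "(1 + K) * (1 + B0) = (1 + B0) + K * (1 + B0)" by (simp add: algebra_simps)
    moreover have "K * (1 + B0) \<ge> 0" using B0 K by simp
    ultimately show ?thesis unfolding B_def by linarith
  qed
  have c2: "c\<^sup>2 \<le> 1" using c1 by (simp add: abs_square_le_1)
  have Kp: "K > 0"
  proof (rule ccontr)
    assume "\<not> K > 0" then have "K = 0" using K by simp
    then have "a = 0 \<and> b = 0" using h1 by (simp add: sum_power2_le_zero_iff)
    then show False using det by simp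
  qed
  have m1: "K * (c\<^sup>2 + d\<^sup>2) \<le> K * (1 + d\<^sup>2)" using c2 K by (intro mult_left_mono) auto
  have m2: "K * (c\<^sup>2 + a\<^sup>2) \<le> K * (1 + a\<^sup>2)" using c2 K by (intro mult_left_mono) auto
  have a1: "a\<^sup>2 \<le> K * (1 + d\<^sup>2)" using h1 m1 zero_le_power2[of b] by linarith
  have d1: "d\<^sup>2 \<le> K * (1 + a\<^sup>2)" using h2 m2 zero_le_power2[of b] by linarith
  have b1: "b\<^sup>2 \<le> K * (1 + d\<^sup>2)" using h1 m1 zero_le_power2[of a] by linarith
  have b2: "b\<^sup>2 \<le> K * (1 + a\<^sup>2)" using h2 m2 zero_le_power2[of d] by linarith
  have "(a * d)\<^sup>2 = (1 + b * c)\<^sup>2" using det by (simp add: algebra_simps)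
  also have "\<dots> \<le> 2 + 2 * (b * c)\<^sup>2"
  proof -
    have "0 \<le> (1 - b * c)\<^sup>2" by simp
    then show ?thesis unfolding power2_sum power2_diff by simp
  qed
  also have "(b * c)\<^sup>2 \<le> b\<^sup>2" using c2 by (simp add: power_mult_distrib mult_left_le)
  finally have ad: "a\<^sup>2 * d\<^sup>2 \<le> 2 + 2 * b\<^sup>2" by (simp add: power_mult_distrib)
  have ad2: "a\<^sup>2 \<le> B0 \<and> d\<^sup>2 \<le> B0"
  proof (cases "d\<^sup>2 \<le> a\<^sup>2")
    case True
    have "a\<^sup>2 * d\<^sup>2 \<le> 2 + 2 * K * (1 + a\<^sup>2)" using ad b2 by linarith
    then have "a\<^sup>2 \<le> B0" unfolding B0_def by (intro bnd_aux[OF Kp a1 True]) auto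
    with True show ?thesis by simp
  next
    case False
    have "d\<^sup>2 * a\<^sup>2 \<le> 2 + 2 * K * (1 + d\<^sup>2)" using ad b1 by (simp add: mult.commute)
    then have "d\<^sup>2 \<le> B0" unfolding B0_def using False by (intro bnd_aux[OF Kp d1]) auto
    with False show ?thesis by simp
  qed
  have "K * (1 + d\<^sup>2) \<le> K * (1 + B0)" using ad2 K by (intro mult_left_mono) auto
  moreover have "K * (1 + B0) \<le> (1 + K) * (1 + B0)" using B0 by (intro mult_right_mono) auto
  ultimately have bb: "b\<^sup>2 \<le> B" using b1 unfolding B_def by linarith
  have sq: "\<And>x. x\<^sup>2 \<le> B \<Longrightarrow> \<bar>x\<bar> \<le> B"
  proof -
    fix x :: real assume "x\<^sup>2 \<le> B"
    moreover have "\<bar>x\<bar> \<le> 1 \<or> \<bar>x\<bar> \<le> x\<^sup>2"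
    proof (cases "\<bar>x\<bar> \<le> 1")
      case False
      then have "\<bar>x\<bar> * 1 \<le> \<bar>x\<bar> * \<bar>x\<bar>" by (intro mult_left_mono) auto
      then show ?thesis by (simp add: power2_eq_square)
    qed simp
    ultimately show "\<bar>x\<bar> \<le> B" using BB0 B0 by linarith
  qed
  show ?thesis using sq[of a] sq[of b] sq[of d] ad2 bb BB0 B0 c1 unfolding B_def[symmetric] B0_def[symmetric] by auto
qed



lemma prod_bound: fixes x u y v B e :: real
  assumes "\<bar>x\<bar> \<le> B" "\<bar>u\<bar> \<le> e" "\<bar>y\<bar> \<le> B" "\<bar>v\<bar> \<le> e"
  shows "\<bar>x * u - y * v\<bar> \<le> 2 * B * e"
proof -
  have "\<bar>x * u\<bar> \<le> B * e" using assms by (simp add: abs_mult mult_mono')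
  moreover have "\<bar>y * v\<bar> \<le> B * e" using assms by (simp add: abs_mult mult_mono')
  ultimately show ?thesis by linarith
qed

definition phi :: "m2 \<Rightarrow> (real \<times> real) \<times> (real \<times> real)" where
  "phi g = ((ma g, mb g), (mc g, md g))"

lemma phi_inj: "inj phi"
  by (rule injI) (auto simp: phi_def intro: m2_eqI)

lemma phi_dist: "\<bar>ma g - ma h\<bar> \<le> dist (phi g) (phi h) \<and> \<bar>mb g - mb h\<bar> \<le> dist (phi g) (phi h)
   \<and> \<bar>mc g - mc h\<bar> \<le> dist (phi g) (phi h) \<and> \<bar>md g - md h\<bar> \<le> dist (phi g) (phi h)"
proof -
  have 1: "dist (fst (phi g)) (fst (phi h)) \<le> dist (phi g) (phi h)" by (rule dist_fst_le)
  have 2: "dist (snd (phi g)) (snd (phi h)) \<le> dist (phi g) (phi h)" by (rule dist_snd_le)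
  have "dist (fst (fst (phi g))) (fst (fst (phi h))) \<le> dist (fst (phi g)) (fst (phi h))" by (rule dist_fst_le)
  moreover have "dist (snd (fst (phi g))) (snd (fst (phi h))) \<le> dist (fst (phi g)) (fst (phi h))" by (rule dist_snd_le)
  moreover have "dist (fst (snd (phi g))) (fst (snd (phi h))) \<le> dist (snd (phi g)) (snd (phi h))" by (rule dist_fst_le)
  moreover have "dist (snd (snd (phi g))) (snd (snd (phi h))) \<le> dist (snd (phi g)) (snd (phi h))" by (rule dist_snd_le)
  ultimately show ?thesis using 1 2 by (simp add: phi_def dist_real_def)
qed

lemma finite_bounded:
  assumes G: "fuchsian G"
  shows "finite {h\<in>G. \<bar>ma h\<bar> \<le> B \<and> \<bar>mb h\<bar> \<le> B \<and> \<bar>mc h\<bar> \<le> B \<and> \<bar>md h\<bar> \<le> B}" (is "finite ?S")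
proof (rule ccontr)
  assume inf: "infinite ?S"
  have psl: "psl_subgroup G" using G by (simp add: fuchsian_def)
  have "mI \<in> G" using psl by (simp add: psl_subgroup_def)
  then obtain e0 where e0: "e0 > 0" and disc: "\<And>h. h \<in> G \<Longrightarrow>
      \<bar>ma h - ma mI\<bar> + \<bar>mb h - mb mI\<bar> + \<bar>mc h - mc mI\<bar> + \<bar>md h - md mI\<bar> < e0 \<Longrightarrow> h = mI"
    using G unfolding fuchsian_def by blast
  define C where "C = ({-B..B} \<times> {-B..B}) \<times> ({-B..B} \<times> {-B..B})"
  have cC: "compact C" unfolding C_def by (intro compact_Times compact_Icc)
  have injS: "inj_on phi ?S" by (rule inj_on_subset[OF phi_inj]) simp
  have infP: "infinite (phi ` ?S)"
  proof
    assume "finite (phi ` ?S)"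
    then have "finite ?S" using finite_imageD[OF _ injS] by blast
    with inf show False by blast
  qed
  have subC: "phi ` ?S \<subseteq> C" by (auto simp: C_def phi_def)
  obtain x where "x \<in> C" "x islimpt (phi ` ?S)" using Heine_Borel_imp_Bolzano_Weierstrass[OF cC infP subC] by blast
  then have lp: "\<And>e. e > 0 \<Longrightarrow> \<exists>y\<in>phi ` ?S. y \<noteq> x \<and> dist y x < e" by (simp add: islimpt_approachable)
  have "?S \<noteq> {}" using inf finite.emptyI by metis
  then obtain h0 where "h0 \<in> ?S" by blast
  then have "\<bar>ma h0\<bar> \<le> B" by blast
  then have B0: "B \<ge> 0" using abs_ge_zero[of "ma h0"] by linarith
  define eta where "eta = e0 / (8 * B + 1)"
  have eta: "eta > 0" using e0 B0 by (simp add: eta_def)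
  have Beta: "8 * B * eta < e0" using e0 B0 by (simp add: eta_def field_simps)
  obtain y1 where y1: "y1 \<in> phi ` ?S" "y1 \<noteq> x" "dist y1 x < eta / 2"
    using lp[of "eta/2"] eta half_gt_zero by blast
  have "dist y1 x > 0" using y1 by simp
  then obtain y2 where y2: "y2 \<in> phi ` ?S" "y2 \<noteq> x" "dist y2 x < dist y1 x" using lp by blast
  have "y1 \<noteq> y2" using y2 by auto
  have d12: "dist y1 y2 < eta" using y1 y2 dist_triangle[of y1 y2 x] by (simp add: dist_commute)
  obtain g where g: "g \<in> ?S" "y1 = phi g" using y1 by blast
  obtain h where h: "h \<in> ?S" "y2 = phi h" using y2 by blast
  have gh: "g \<noteq> h" using \<open>y1 \<noteq> y2\<close> g h by auto
  have dg: "mdet g = 1" using g psl by (auto simp: psl_subgroup_def SL2_def)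
  have ds: "\<bar>ma h - ma g\<bar> \<le> eta" "\<bar>mb h - mb g\<bar> \<le> eta" "\<bar>mc h - mc g\<bar> \<le> eta" "\<bar>md h - md g\<bar> \<le> eta"
    using phi_dist[of h g] d12 g h by (auto simp: dist_commute)
  have bg: "\<bar>ma g\<bar> \<le> B" "\<bar>mb g\<bar> \<le> B" "\<bar>mc g\<bar> \<le> B" "\<bar>md g\<bar> \<le> B" using g by auto
  define k where "k = mmul (minv g) h"
  have kG: "k \<in> G" using psl g h unfolding k_def psl_subgroup_def by blast
  have e1: "ma k - ma mI = md g * (ma h - ma g) - mb g * (mc h - mc g)"
    using dg by (simp add: k_def mmul_def minv_def mI_def mdet_def algebra_simps)
  have e2: "mb k - mb mI = md g * (mb h - mb g) - mb g * (md h - md g)"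
    by (simp add: k_def mmul_def minv_def mI_def algebra_simps)
  have e3: "mc k - mc mI = ma g * (mc h - mc g) - mc g * (ma h - ma g)"
    by (simp add: k_def mmul_def minv_def mI_def algebra_simps)
  have e4: "md k - md mI = ma g * (md h - md g) - mc g * (mb h - mb g)"
    using dg by (simp add: k_def mmul_def minv_def mI_def mdet_def algebra_simps)
  have "\<bar>ma k - ma mI\<bar> \<le> 2 * B * eta" unfolding e1 by (rule prod_bound) (use ds bg in auto)
  moreover have "\<bar>mb k - mb mI\<bar> \<le> 2 * B * eta" unfolding e2 by (rule prod_bound) (use ds bg in auto)
  moreover have "\<bar>mc k - mc mI\<bar> \<le> 2 * B * eta" unfolding e3 by (rule prod_bound) (use ds bg in auto)
  moreover have "\<bar>md k - md mI\<bar> \<le> 2 * B * eta" unfolding e4 by (rule prod_bound) (use ds bg in auto)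
  ultimately have "\<bar>ma k - ma mI\<bar> + \<bar>mb k - mb mI\<bar> + \<bar>mc k - mc mI\<bar> + \<bar>md k - md mI\<bar> < e0" using Beta by linarith
  then have "k = mI" by (rule disc[OF kG])
  have "h = mmul (mmul g (minv g)) h" using minv_right[OF dg] by simp
  also have "\<dots> = mmul g k" by (simp add: k_def mmul_assoc)
  finally have "h = g" using \<open>k = mI\<close> by simp
  with gh show False by simp
qed

lemma delta_exists:
  assumes G: "fuchsian G" and K0: "K \<ge> 0"
    and K: "\<forall>h\<in>G. (ma h)\<^sup>2 + (mb h)\<^sup>2 \<le> K * ((mc h)\<^sup>2 + (md h)\<^sup>2)"
    and Hc: "\<forall>h\<in>G. \<not> is_id h \<longrightarrow> mc h \<noteq> 0"
  shows "\<exists>\<delta>>0. \<forall>h\<in>G. \<not> is_id h \<longrightarrow> \<delta> \<le> \<bar>mc h\<bar>"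
proof -
  have psl: "psl_subgroup G" using G by (simp add: fuchsian_def)
  define B where "B = (1 + K) * (1 + (1 + 3 * K + 4 * K\<^sup>2))"
  define S where "S = {h\<in>G. \<not> is_id h \<and> \<bar>mc h\<bar> \<le> 1}"
  have "S \<subseteq> {h\<in>G. \<bar>ma h\<bar> \<le> B \<and> \<bar>mb h\<bar> \<le> B \<and> \<bar>mc h\<bar> \<le> B \<and> \<bar>md h\<bar> \<le> B}"
  proof
    fix h assume h: "h \<in> S"
    then have hG: "h \<in> G" and c1: "\<bar>mc h\<bar> \<le> 1" by (auto simp: S_def)
    have mi: "minv h \<in> G" using psl hG by (simp add: psl_subgroup_def)
    have d: "ma h * md h - mb h * mc h = 1" using psl hG by (auto simp: psl_subgroup_def SL2_def mdet_def)
    have h1: "(ma h)\<^sup>2 + (mb h)\<^sup>2 \<le> K * ((mc h)\<^sup>2 + (md h)\<^sup>2)" using K hG by blast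
    have h2: "(md h)\<^sup>2 + (mb h)\<^sup>2 \<le> K * ((mc h)\<^sup>2 + (ma h)\<^sup>2)" using K mi by (auto simp: minv_def)
    show "h \<in> {h\<in>G. \<bar>ma h\<bar> \<le> B \<and> \<bar>mb h\<bar> \<le> B \<and> \<bar>mc h\<bar> \<le> B \<and> \<bar>md h\<bar> \<le> B}"
      using bounded_entries[OF K0 h1 h2 d c1] hG unfolding B_def by auto
  qed
  then have fin: "finite S" using finite_bounded[OF G] finite_subset by blast
  show ?thesis
  proof (cases "S = {}")
    case True
    show ?thesis
    proof (intro exI[of _ 1] conjI ballI impI)
      fix h assume "h \<in> G" "\<not> is_id h"
      then show "1 \<le> \<bar>mc h\<bar>" using True unfolding S_def by fastforce
    qed simp
  next
    case False
    define m where "m = Min ((\<lambda>h. \<bar>mc h\<bar>) ` S)"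
    have mpos: "m > 0" using fin False Hc unfolding m_def S_def by (subst Min_gr_iff) auto
    show ?thesis
    proof (intro exI[of _ "min 1 m"] conjI ballI impI)
      show "min 1 m > 0" using mpos by simp
      fix h assume h: "h \<in> G" "\<not> is_id h"
      show "min 1 m \<le> \<bar>mc h\<bar>"
      proof (cases "\<bar>mc h\<bar> \<le> 1")
        case True
        then have "h \<in> S" using h by (simp add: S_def)
        then have "m \<le> \<bar>mc h\<bar>" unfolding m_def using fin by simp
        then show ?thesis by simp
      next
        case False then show ?thesis by simp
      qed
    qed
  qed
qed



lemma move_in:
  fixes c d x0 e :: real
  assumes c: "c \<noteq> 0" and x0: "\<bar>c * x0 + d\<bar> \<le> 1" and e: "e > 0"
  shows "\<exists>x1. \<bar>c * x1 + d\<bar> < 1 \<and> \<bar>x1 - x0\<bar> < e"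
proof -
  define m where "m = - d / c"
  define t where "t = min (1/2) (e * \<bar>c\<bar> / 2)"
  have t: "0 < t" "t \<le> 1/2" "t \<le> e * \<bar>c\<bar> / 2" using c e by (auto simp: t_def)
  define x1 where "x1 = x0 + t * (m - x0)"
  have "c * x1 + d = (1 - t) * (c * x0 + d)" using c by (simp add: x1_def m_def field_simps)
  then have "\<bar>c * x1 + d\<bar> = (1 - t) * \<bar>c * x0 + d\<bar>" using t by (simp add: abs_mult)
  also have "\<dots> \<le> 1 - t" using t x0 by (simp add: mult_left_le)
  finally have 1: "\<bar>c * x1 + d\<bar> < 1" using t by linarith
  have "\<bar>m - x0\<bar> = \<bar>c * x0 + d\<bar> / \<bar>c\<bar>" using c by (simp add: m_def field_simps abs_minus_commute flip: abs_divide) (simp add: abs_minus_commute add.commute)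
  also have "\<dots> \<le> 1 / \<bar>c\<bar>" using x0 c by (simp add: divide_right_mono)
  finally have mx: "\<bar>m - x0\<bar> \<le> 1 / \<bar>c\<bar>" .
  have "\<bar>x1 - x0\<bar> = t * \<bar>m - x0\<bar>" using t by (simp add: x1_def abs_mult)
  also have "\<dots> \<le> t * (1 / \<bar>c\<bar>)" using mult_left_mono[OF mx, of t] t by simp
  also have "\<dots> \<le> (e * \<bar>c\<bar> / 2) * (1 / \<bar>c\<bar>)" using t c by (intro mult_right_mono) auto
  also have "\<dots> = e / 2" using c by simp
  finally have "\<bar>x1 - x0\<bar> < e" using e by linarith
  with 1 show ?thesis by blast
qed

lemma bdK_point:
  assumes d: "\<delta> > 0" and dl: "\<forall>h\<in>G. \<not> is_id h \<longrightarrow> \<delta> \<le> \<bar>mc h\<bar>"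
    and gG: "\<gamma> \<in> G" and ni: "\<not> is_id \<gamma>" and x1: "\<bar>mc \<gamma> * x1 + md \<gamma>\<bar> < 1"
  shows "\<exists>p\<in>bdK G. Re p = x1"
proof -
  define c where "c = mc \<gamma>"
  define dd where "dd = md \<gamma>"
  define u where "u = \<bar>c * x1 + dd\<bar>"
  have u1: "u < 1" using x1 by (simp add: u_def c_def dd_def)
  define y0 where "y0 = (1 - u) / (2 * (\<bar>c\<bar> + 1))"
  have y0: "y0 > 0" using u1 by (simp add: y0_def)
  have cy: "\<bar>c * y0\<bar> < 1 - u"
  proof -
    have "\<bar>c * y0\<bar> = \<bar>c\<bar> * y0" using y0 by (simp add: abs_mult)
    also have "\<dots> \<le> (\<bar>c\<bar> + 1) * y0" using y0 by (simp add: mult_right_mono)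
    also have "\<dots> = (1 - u) / 2" by (simp add: y0_def field_simps add_pos_nonneg)
    moreover have "(1 - u) / 2 < 1 - u" using u1 by simp
    ultimately show ?thesis by linarith
  qed
  define T where "T = 1 / \<delta> + 1"
  define z0 where "z0 = Complex x1 y0"
  define zT where "zT = Complex x1 T"
  have T0: "T > 0" using d by (simp add: T_def add_pos_pos)
  have zTK: "zT \<in> fordK G"
  proof -
    have "zT \<in> UHP" using T0 by (simp add: zT_def UHP_def)
    moreover have "zT \<in> ext_isom_circle h" if h: "h \<in> G" "\<not> is_id h" for h
    proof -
      have "\<delta> \<le> \<bar>mc h\<bar>" using dl h by blast
      then have "\<delta> * T \<le> \<bar>mc h\<bar> * T" using T0 by (simp add: mult_right_mono)
      moreover have "\<delta> * T = 1 + \<delta>" using d by (simp add: T_def field_simps)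
      moreover have "\<bar>Im (of_real (mc h) * zT + of_real (md h))\<bar> = \<bar>mc h\<bar> * T" using T0 by (simp add: zT_def abs_mult)
      ultimately have "1 < \<bar>Im (of_real (mc h) * zT + of_real (md h))\<bar>" using d by linarith
      then have "1 < cmod (of_real (mc h) * zT + of_real (md h))" using abs_Im_le_cmod by (rule less_le_trans)
      then show ?thesis using \<open>zT \<in> UHP\<close> by (simp add: ext_isom_circle_def)
    qed
    ultimately show ?thesis by (auto simp: fordK_def)
  qed
  have z0K: "z0 \<notin> fordK G"
  proof
    assume "z0 \<in> fordK G"
    then have "z0 \<in> ext_isom_circle \<gamma>" using gG ni by (auto simp: fordK_def)
    then have "1 < cmod (of_real c * z0 + of_real dd)" by (simp add: ext_isom_circle_def c_def dd_def)
    also have "\<dots> \<le> \<bar>Re (of_real c * z0 + of_real dd)\<bar> + \<bar>Im (of_real c * z0 + of_real dd)\<bar>" by (rule cmod_le)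
    also have "\<dots> = u + \<bar>c * y0\<bar>" by (simp add: z0_def u_def)
    finally show False using cy by linarith
  qed
  define S where "S = closed_segment z0 zT"
  have "connected S" unfolding S_def by (simp add: convex_connected)
  moreover have "S \<inter> fordK G \<noteq> {}" using zTK by (auto simp: S_def)
  moreover have "S - fordK G \<noteq> {}" using z0K by (auto simp: S_def)
  ultimately obtain p where p: "p \<in> S" "p \<in> frontier (fordK G)" using connected_Int_frontier by blast
  then obtain v where v: "0 \<le> v" "v \<le> 1" "p = (1 - v) *\<^sub>R z0 + v *\<^sub>R zT" by (auto simp: S_def in_segment)
  have "Re p = (1 - v) * x1 + v * x1" using v(3) by (simp add: z0_def zT_def)
  then have "Re p = x1" by (simp add: algebra_simps)
  moreover have "Im p > 0"
  proof -
    have "Im p = (1 - v) * y0 + v * T" using v by (simp add: z0_def zT_def)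
    moreover have "(1 - v) * y0 \<ge> 0" "v * T \<ge> 0" using v y0 T0 by auto
    moreover have "(1 - v) * y0 > 0 \<or> v * T > 0" using v y0 T0 by (cases "v = 1") auto
    ultimately show ?thesis by linarith
  qed
  ultimately show ?thesis using p by (auto simp: bdK_def UHP_def)
qed

lemma J_sub:
  assumes d: "\<delta> > 0" and dl: "\<forall>h\<in>G. \<not> is_id h \<longrightarrow> \<delta> \<le> \<bar>mc h\<bar>"
    and Hc: "\<forall>h\<in>G. \<not> is_id h \<longrightarrow> mc h \<noteq> 0"
    and alb: "\<forall>z\<in>bdK G. \<alpha> \<le> Re z" and bub: "\<forall>z\<in>bdK G. Re z \<le> \<beta>"
  shows "\<forall>\<gamma>\<in>G. \<not> is_id \<gamma> \<longrightarrow> (\<forall>x. \<bar>mc \<gamma> * x + md \<gamma>\<bar> \<le> 1 \<longrightarrow> \<alpha> \<le> x \<and> x \<le> \<beta>)"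
proof (intro ballI impI allI)
  fix \<gamma> x assume g: "\<gamma> \<in> G" "\<not> is_id \<gamma>" and x: "\<bar>mc \<gamma> * x + md \<gamma>\<bar> \<le> 1"
  have c: "mc \<gamma> \<noteq> 0" using Hc g by blast
  show "\<alpha> \<le> x \<and> x \<le> \<beta>"
  proof (rule ccontr)
    assume "\<not> (\<alpha> \<le> x \<and> x \<le> \<beta>)"
    then have e: "max (\<alpha> - x) (x - \<beta>) > 0" by auto
    obtain x1 where x1: "\<bar>mc \<gamma> * x1 + md \<gamma>\<bar> < 1" "\<bar>x1 - x\<bar> < max (\<alpha> - x) (x - \<beta>)"
      using move_in[OF c x e] by blast
    obtain p where p: "p \<in> bdK G" "Re p = x1" using bdK_point[OF d dl g x1(1)] by blast
    have "\<alpha> \<le> x1" "x1 \<le> \<beta>" using p alb bub by auto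
    then show False using x1(2) by (auto simp: max_def split: if_splits)
  qed
qed


theorem lemma4p6:
  fixes \<Gamma> :: "m2 set" and \<alpha> \<beta> \<alpha>' \<beta>' lam :: real
  assumes fuchs: "fuchsian \<Gamma>"
    and geom_fin: "geometrically_finite \<Gamma>"
    and non_cocompact: "\<not> cocompact \<Gamma>"
    and has_hyp: "\<exists>g\<in>\<Gamma>. hyperbolic_elt g"
    and no_par: "\<forall>g\<in>\<Gamma>. \<not> parabolic_elt g"
    and inf_area: "infinite_covolume \<Gamma>"
    and ord_inf: "ordinary_nbhd_inf \<Gamma>"
    and alpha_lb: "\<forall>z\<in>bdK \<Gamma>. \<alpha> \<le> Re z"
    and alpha_greatest: "\<forall>a. (\<forall>z\<in>bdK \<Gamma>. a \<le> Re z) \<longrightarrow> a \<le> \<alpha>"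
    and beta_ub: "\<forall>z\<in>bdK \<Gamma>. Re z \<le> \<beta>"
    and beta_least: "\<forall>b. (\<forall>z\<in>bdK \<Gamma>. Re z \<le> b) \<longrightarrow> \<beta> \<le> b"
    and "\<alpha>' < \<alpha>" and "\<beta>' > \<beta>"
    and lam_def: "lam = \<beta>' - \<alpha>'"
  shows "stab_inf (Gamma_W \<Gamma> lam) = gen_group {translation lam}"
proof -
  have G: "psl_subgroup \<Gamma>" using fuchs by (simp add: fuchsian_def)
  have nl: "\<not> limit_point_inf \<Gamma>" using ord_inf by (simp add: ordinary_nbhd_inf_def)
  obtain K where K0: "K \<ge> 0" and K: "\<forall>h\<in>\<Gamma>. (ma h)\<^sup>2 + (mb h)\<^sup>2 \<le> K * ((mc h)\<^sup>2 + (md h)\<^sup>2)"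
    using bound_K[OF G nl] by blast
  have Hc: "\<forall>h\<in>\<Gamma>. \<not> is_id h \<longrightarrow> mc h \<noteq> 0" by (rule c_nonzero[OF G K no_par])
  obtain \<delta> where d: "\<delta> > 0" and dl: "\<forall>h\<in>\<Gamma>. \<not> is_id h \<longrightarrow> \<delta> \<le> \<bar>mc h\<bar>"
    using delta_exists[OF fuchs K0 K Hc] by blast
  have HJ: "\<forall>\<gamma>\<in>\<Gamma>. \<not> is_id \<gamma> \<longrightarrow> (\<forall>x. \<bar>mc \<gamma> * x + md \<gamma>\<bar> \<le> 1 \<longrightarrow> \<alpha> \<le> x \<and> x \<le> \<beta>)"
    by (rule J_sub[OF d dl Hc alpha_lb beta_ub])
  have ne: "bdK \<Gamma> \<noteq> {}"
  proof
    assume "bdK \<Gamma> = {}"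
    then have "\<alpha> + 1 \<le> \<alpha>" using alpha_greatest by blast
    then show False by simp
  qed
  then obtain z where "z \<in> bdK \<Gamma>" by blast
  then have ab: "\<alpha> \<le> \<beta>" using alpha_lb beta_ub by force
  have lam: "\<beta> - \<alpha> < lam" using assms(12,13) lam_def by linarith
  have R: "Gamma_REL \<Gamma> \<subseteq> \<Gamma>" by (auto simp: Gamma_REL_def)
  show ?thesis unfolding Gamma_W_def by (rule pingpong[OF G R Hc HJ lam ab])
qed

end
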